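(* Let $n\ge3$ and let $\sigma$ be a Riemannian metric on the complement of a ball in $\mathbb{R}^n$ which is asymptotically flat. There exists $r_1>0$, depending only on $\sigma$, such that for every $r_0\ge r_1$ there exists a rotationally symmetric function $b\colon\mathbb{R}^n\setminus B_{r_0}(0)\to\mathbb{R}$ with (i) $b(x)\simeq r_0^{\,n-\frac32}\,|x|^{-(n-\frac52)}$, and (ii) $g^{ij}(\sigma,\nabla b)\,{}^\sigma\nabla^2_{ij}b\le 0$, i.e. $b$ is a static supersolution.
   Context: Asymptotic flatness of $\sigma$ means: there is a bounded function $\omega$ with $\omega(r)\to0$ as $r\to\infty$ such that $|\sigma_{ij}-\delta_{ij}|\lesssim\omega(r)$ and $|\partial\sigma_{ij}|\lesssim\omega(r)/r$ for $r=|x|$ large (Euclidean norms and partial derivatives). For a function $w$ with $|\nabla w|_\sigma<1$, $g^{ij}(\sigma,\nabla w)=\sigma^{ij}+\frac{\sigma^{ik}\sigma^{jl}w_kw_l}{1-\sigma^{kl}w_kw_l}$ and ${}^\sigma\nabla^2_{ij}w=w_{ij}-\Gamma^k_{ij}w_k$ with $\Gamma$ the Christoffel symbols of $\sigma$. The notation $x\lesssim y$ means $x\le Cy$ for a constant $C=C(n)>0$, and $x\simeq y$ means $x\lesssim y$ and $y\lesssim x$. *)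

theory Defs
  imports "HOL-Analysis.Analysis"
begin

definition partial :: "'n::finite \<Rightarrow> (real^'n \<Rightarrow> real) \<Rightarrow> real^'n \<Rightarrow> real" where
  "partial k f x = deriv (\<lambda>t. f (x + t *\<^sub>R axis k 1)) 0"

fun iter_partial :: "'n::finite list \<Rightarrow> (real^'n \<Rightarrow> real) \<Rightarrow> real^'n \<Rightarrow> real" where
  "iter_partial [] f = f"
| "iter_partial (k # ks) f = partial k (iter_partial ks f)"

definition smooth_on :: "(real^'n::finite) set \<Rightarrow> (real^'n \<Rightarrow> real) \<Rightarrow> bool" where
  "smooth_on S f \<longleftrightarrow> (\<forall>ks. iter_partial ks f differentiable_on S)"

definition twice_diff_on :: "(real^'n::finite) set \<Rightarrow> (real^'n \<Rightarrow> real) \<Rightarrow> bool" where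
  "twice_diff_on S f \<longleftrightarrow> f differentiable_on S \<and> (\<forall>k. partial k f differentiable_on S)"

definition riemannian_exterior :: "(real^'n::finite \<Rightarrow> real^'n^'n) \<Rightarrow> real \<Rightarrow> bool" where
  "riemannian_exterior \<sigma> R0 \<longleftrightarrow>
     (\<forall>i j. smooth_on {x. R0 < norm x} (\<lambda>x. \<sigma> x $ i $ j)) \<and>
     (\<forall>x. R0 < norm x \<longrightarrow> transpose (\<sigma> x) = \<sigma> x \<and>
        (\<forall>v. v \<noteq> 0 \<longrightarrow> v \<bullet> (\<sigma> x *v v) > 0))"

definition asymp_flat :: "(real^'n::finite \<Rightarrow> real^'n^'n) \<Rightarrow> bool" where
  "asymp_flat \<sigma> \<longleftrightarrow>
     (\<exists>\<omega> :: real \<Rightarrow> real. (\<exists>M. \<forall>r. \<bar>\<omega> r\<bar> \<le> M) \<and> (\<omega> \<longlongrightarrow> 0) at_top \<and>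
       (\<exists>R. \<forall>x. R \<le> norm x \<longrightarrow>
          (\<forall>i j. \<bar>\<sigma> x $ i $ j - (if i = j then 1 else 0)\<bar> \<le> \<omega> (norm x) \<and>
                 (\<forall>k. \<bar>partial k (\<lambda>y. \<sigma> y $ i $ j) x\<bar> \<le> \<omega> (norm x) / norm x))))"

definition inv_metric :: "(real^'n::finite \<Rightarrow> real^'n^'n) \<Rightarrow> real^'n \<Rightarrow> 'n \<Rightarrow> 'n \<Rightarrow> real" where
  "inv_metric \<sigma> x i j = matrix_inv (\<sigma> x) $ i $ j"

definition christoffel :: "(real^'n::finite \<Rightarrow> real^'n^'n) \<Rightarrow> real^'n \<Rightarrow> 'n \<Rightarrow> 'n \<Rightarrow> 'n \<Rightarrow> real" where
  "christoffel \<sigma> x k i j = (1/2) * (\<Sum>l\<in>UNIV. inv_metric \<sigma> x k l *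
      (partial i (\<lambda>y. \<sigma> y $ j $ l) x + partial j (\<lambda>y. \<sigma> y $ i $ l) x
       - partial l (\<lambda>y. \<sigma> y $ i $ j) x))"

definition grad_norm2 :: "(real^'n::finite \<Rightarrow> real^'n^'n) \<Rightarrow> (real^'n \<Rightarrow> real) \<Rightarrow> real^'n \<Rightarrow> real" where
  "grad_norm2 \<sigma> w x = (\<Sum>k\<in>UNIV. \<Sum>l\<in>UNIV. inv_metric \<sigma> x k l * partial k w x * partial l w x)"

definition g_inv :: "(real^'n::finite \<Rightarrow> real^'n^'n) \<Rightarrow> (real^'n \<Rightarrow> real) \<Rightarrow> real^'n \<Rightarrow> 'n \<Rightarrow> 'n \<Rightarrow> real" where
  "g_inv \<sigma> w x i j = inv_metric \<sigma> x i j +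
     (\<Sum>k\<in>UNIV. \<Sum>l\<in>UNIV. inv_metric \<sigma> x i k * inv_metric \<sigma> x j l * partial k w x * partial l w x)
     / (1 - grad_norm2 \<sigma> w x)"

definition cov_hess :: "(real^'n::finite \<Rightarrow> real^'n^'n) \<Rightarrow> (real^'n \<Rightarrow> real) \<Rightarrow> real^'n \<Rightarrow> 'n \<Rightarrow> 'n \<Rightarrow> real" where
  "cov_hess \<sigma> w x i j = partial i (partial j w) x - (\<Sum>k\<in>UNIV. christoffel \<sigma> x k i j * partial k w x)"

definition static_op :: "(real^'n::finite \<Rightarrow> real^'n^'n) \<Rightarrow> (real^'n \<Rightarrow> real) \<Rightarrow> real^'n \<Rightarrow> real" where
  "static_op \<sigma> w x = (\<Sum>i\<in>UNIV. \<Sum>j\<in>UNIV. g_inv \<sigma> w x i j * cov_hess \<sigma> w x i j)"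

end

theory Submission
  imports Defs
begin


lemma sum_abs_bound:
  fixes f :: "'n::finite \<Rightarrow> real"
  assumes "\<And>i. \<bar>f i\<bar> \<le> B"
  shows "\<bar>\<Sum>i\<in>UNIV. f i\<bar> \<le> real CARD('n) * B"
proof -
  have "\<bar>\<Sum>i\<in>UNIV. f i\<bar> \<le> (\<Sum>i\<in>UNIV. \<bar>f i\<bar>)" by (rule sum_abs)
  also have "\<dots> \<le> of_nat (card (UNIV::'n set)) * B" by (rule sum_bounded_above) (use assms in auto)
  finally show ?thesis by simp
qed

lemma abs_mult2:
  fixes u v :: real
  assumes "\<bar>u\<bar> \<le> A" "\<bar>v\<bar> \<le> B"
  shows "\<bar>u * v\<bar> \<le> A * B"
  unfolding abs_mult using assms by (intro mult_mono) auto

lemma abs_mult3: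
  fixes u v w :: real
  assumes "\<bar>u\<bar> \<le> A" "\<bar>v\<bar> \<le> B" "\<bar>w\<bar> \<le> C"
  shows "\<bar>u * v * w\<bar> \<le> A * (B * C)"
proof -
  have "\<bar>v\<bar> * \<bar>w\<bar> \<le> B * C" using assms by (intro mult_mono) auto
  then have "\<bar>u\<bar> * (\<bar>v\<bar> * \<bar>w\<bar>) \<le> A * (B * C)" using assms by (intro mult_mono) auto
  then show ?thesis by (simp add: abs_mult mult.assoc)
qed

lemma static_core:
  fixes S :: "'n::finite \<Rightarrow> 'n \<Rightarrow> real" and \<Gamma> :: "'n \<Rightarrow> 'n \<Rightarrow> 'n \<Rightarrow> real"
    and x g :: "'n \<Rightarrow> real" and H :: "'n \<Rightarrow> 'n \<Rightarrow> real"
  defines "N \<equiv> real CARD('n)"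
  assumes s: "s = (\<Sum>k\<in>UNIV. x k ^ 2)" "s > 0"
    and h: "h > 0" and a: "a = h * sqrt s" "a^2 \<le> 1/(64*N^5)"
    and Sb: "\<And>i j. \<bar>S i j - (if i = j then 1 else 0)\<bar> \<le> e" and e: "e \<le> 1/(8*N^2*(N+1))"
    and Gb: "\<And>k i j. \<bar>\<Gamma> k i j\<bar> \<le> \<gamma>" and gam: "\<gamma> * a \<le> h/(32*N^3)"
    and g: "\<And>k. g k = - h * x k"
    and H: "\<And>i j. H i j = h * ((N - 1/2) * x i * x j / s - (if i = j then 1 else 0))"
  shows "(\<Sum>k\<in>UNIV. \<Sum>l\<in>UNIV. S k l * g k * g l) < 1 \<and>
    (\<Sum>i\<in>UNIV. \<Sum>j\<in>UNIV. (S i j + (\<Sum>k\<in>UNIV. \<Sum>l\<in>UNIV. S i k * S j l * g k * g l)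
        / (1 - (\<Sum>k\<in>UNIV. \<Sum>l\<in>UNIV. S k l * g k * g l)))
      * (H i j - (\<Sum>k\<in>UNIV. \<Gamma> k i j * g k))) \<le> 0"
proof -
  have N1: "N \<ge> 1" unfolding N_def by (simp add: Suc_le_eq)
  have a0: "a \<ge> 0" using a(1) h s(2) by simp
  have e0: "e \<ge> 0" using Sb[of undefined undefined] by simp
  have g0: "\<gamma> \<ge> 0" using Gb[of undefined undefined undefined] by simp
  have N5a: "N^2 \<le> N^5" using N1 by (simp add: power_increasing)
  have N4: "N^4 \<le> N^5" using N1 by (simp add: power_increasing)
  have N5b: "N^4 * (N+1) \<le> 2 * N^5" using N4 by (simp add: algebra_simps power_Suc[symmetric] del: power_Suc)
  have N5c: "N^2 * (N+1) \<ge> 1"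
  proof -
    have "N^2 \<ge> 1" using N1 by simp
    then show ?thesis using N1 mult_mono[of 1 "N^2" 1 "N+1"] by simp
  qed
  note N5 = N5a N5b N5c
  have Na1: "N^2 * a^2 \<le> 1/64"
  proof -
    have "N^2 * a^2 \<le> N^5 * (1/(64*N^5))" by (rule mult_mono[OF N5(1) a(2)]) (use N1 in auto)
    also have "\<dots> = 1/64" using N1 by simp
    finally show ?thesis .
  qed
  have Na2: "N^4 * (N+1) * a^2 \<le> 1/32"
  proof -
    have "N^4 * (N+1) * a^2 \<le> (2*N^5) * (1/(64*N^5))" by (rule mult_mono[OF N5(2) a(2)]) (use N1 in auto)
    also have "\<dots> = 1/32" using N1 by simp
    finally show ?thesis .
  qed
  have Ne: "N^2 * (N+1) * e \<le> 1/8"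
  proof -
    have "N^2 * (N+1) * e \<le> N^2 * (N+1) * (1/(8*N^2*(N+1)))" using e N1 by (intro mult_left_mono) auto
    also have "\<dots> = 1/8" using N1 by simp
    finally show ?thesis .
  qed
  have e1: "e \<le> 1/8" using Ne N5(3) e0 by (smt (verit) mult_left_mono mult_cancel_right1 mult.commute)
  have Ng: "2 * N^3 * (\<gamma> * a) \<le> h/16"
  proof -
    have "2 * N^3 * (\<gamma> * a) \<le> 2 * N^3 * (h/(32*N^3))" using gam N1 by (intro mult_left_mono) auto
    also have "\<dots> = h/16" using N1 by simp
    finally show ?thesis .
  qed
  have xk: "\<bar>x k\<bar> \<le> sqrt s" for k
  proof -
    have "x k ^ 2 \<le> s" unfolding s(1) by (rule member_le_sum) auto
    then show ?thesis using real_sqrt_le_mono by fastforce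
  qed
  have gk: "\<bar>g k\<bar> \<le> a" for k
    using xk[of k] h a(1) by (simp add: g abs_mult mult_left_mono)
  have Sa: "\<bar>S i j\<bar> \<le> 2" for i j using Sb[of i j] e1 by (auto split: if_splits)
  define Q where "Q = (\<Sum>k\<in>UNIV. \<Sum>l\<in>UNIV. S k l * g k * g l)"
  have "\<bar>Q\<bar> \<le> N * (N * (2 * (a * a)))"
    unfolding Q_def N_def
  proof (intro sum_abs_bound)
    fix k l
    show "\<bar>S k l * g k * g l\<bar> \<le> 2 * (a * a)"
      using Sa[of k l] gk[of k] gk[of l] by (rule abs_mult3)
  qed
  then have Qb: "\<bar>Q\<bar> \<le> 1/2" using Na1 by (simp add: power2_eq_square algebra_simps)
  define T where "T i j = (\<Sum>k\<in>UNIV. \<Sum>l\<in>UNIV. S i k * S j l * g k * g l)" for i j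
  have Tb: "\<bar>T i j\<bar> \<le> 4 * (N^2 * a^2)" for i j
  proof -
    have "\<bar>T i j\<bar> \<le> N * (N * (4 * (a * a)))"
      unfolding T_def N_def
    proof (intro sum_abs_bound)
      fix k l
      have "\<bar>S i k * S j l\<bar> \<le> 2 * 2" using Sa[of i k] Sa[of j l] by (rule abs_mult2)
      moreover have "\<bar>g k * g l\<bar> \<le> a * a" using gk[of k] gk[of l] by (rule abs_mult2)
      ultimately have "\<bar>(S i k * S j l) * (g k * g l)\<bar> \<le> (2*2) * (a * a)"
        by (rule abs_mult2)
      then show "\<bar>S i k * S j l * g k * g l\<bar> \<le> 4 * (a * a)" by (simp add: mult.assoc mult.left_commute)
    qed
    then show ?thesis by (simp add: power2_eq_square algebra_simps)
  qed
  define \<eta> where "\<eta> = e + 8 * (N^2 * a^2)"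
  define G where "G i j = S i j + T i j / (1 - Q)" for i j
  define \<delta> :: "'n \<Rightarrow> 'n \<Rightarrow> real" where "\<delta> i j = (if i = j then 1 else 0)" for i j
  have Eb: "\<bar>G i j - \<delta> i j\<bar> \<le> \<eta>" for i j
  proof -
    have q: "1 - Q \<ge> 1/2" using Qb by simp
    have "\<bar>T i j / (1 - Q)\<bar> = \<bar>T i j\<bar> / (1 - Q)" using q by simp
    also have "\<dots> \<le> \<bar>T i j\<bar> / (1/2)" using q by (intro divide_left_mono) auto
    also have "\<dots> \<le> 8 * (N^2 * a^2)" using Tb[of i j] by simp
    finally have "\<bar>T i j / (1 - Q)\<bar> \<le> 8 * (N^2 * a^2)" .
    then show ?thesis using Sb[of i j] unfolding G_def \<eta>_def \<delta>_def by linarith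
  qed
  have eta1: "\<eta> \<le> 1" using e1 Na1 unfolding \<eta>_def by simp
  have Gb2: "\<bar>G i j\<bar> \<le> 2" for i j using Eb[of i j] eta1 unfolding \<delta>_def by (auto split: if_splits)
  have Hb: "\<bar>H i j\<bar> \<le> h * (N + 1)" for i j
  proof -
    have "\<bar>x i * x j\<bar> \<le> sqrt s * sqrt s" using xk[of i] xk[of j] by (rule abs_mult2)
    then have "\<bar>x i * x j / s\<bar> \<le> 1" using s(2) by (simp add: abs_div)
    moreover have "\<bar>N - 1/2\<bar> \<le> N - 1/2" using N1 by simp
    ultimately have "\<bar>(N - 1/2) * (x i * x j / s)\<bar> \<le> (N - 1/2) * 1"
      by (intro abs_mult2)
    moreover have "(N - 1/2) * x i * x j / s = (N - 1/2) * (x i * x j / s)" by simp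
    ultimately have y: "\<bar>(N - 1/2) * x i * x j / s\<bar> \<le> N - 1/2" by simp
    have d: "\<bar>(if i = j then 1 else 0::real)\<bar> \<le> 1" by simp
    have "\<bar>(N - 1/2) * x i * x j / s - (if i = j then 1 else 0)\<bar> \<le> N + 1"
      using abs_triangle_ineq4[of "(N - 1/2) * x i * x j / s" "(if i = j then 1 else 0::real)"] y d by linarith
    then show ?thesis using h unfolding H abs_mult abs_of_pos[OF h] by (intro mult_left_mono) auto
  qed
  define K where "K i j = (\<Sum>k\<in>UNIV. \<Gamma> k i j * g k)" for i j
  have Kb: "\<bar>K i j\<bar> \<le> N * (\<gamma> * a)" for i j
    unfolding K_def N_def
    by (intro sum_abs_bound abs_mult2 Gb gk)
  have split: "G i j * (H i j - K i j) = \<delta> i j * H i j + ((G i j - \<delta> i j) * H i j - G i j * K i j)" for i j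
    by (simp add: algebra_simps)
  have diag: "(\<Sum>i\<in>UNIV. \<Sum>j\<in>UNIV. \<delta> i j * H i j) = - h/2"
  proof -
    have "(\<Sum>i\<in>UNIV. \<Sum>j\<in>UNIV. \<delta> i j * H i j) = (\<Sum>i\<in>UNIV. H i i)"
    proof -
      have "\<And>i j. \<delta> i j * H i j = (if i = j then H i j else 0)" by (simp add: \<delta>_def)
      then show ?thesis by simp
    qed
    also have "\<dots> = (\<Sum>i\<in>UNIV. h * (N - 1/2) / s * x i ^ 2 - h)"
      by (simp add: H power2_eq_square algebra_simps)
    also have "\<dots> = h * (N - 1/2) / s * s - N * h"
    proof -
      have "(\<Sum>i\<in>(UNIV::'n set). h * (N - 1/2) / s * x i ^ 2 - h) = (\<Sum>i\<in>(UNIV::'n set). h * (N - 1/2) / s * x i ^ 2) - (\<Sum>i\<in>(UNIV::'n set). h)"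
        by (simp add: sum_subtractf)
      also have "(\<Sum>i\<in>(UNIV::'n set). h * (N - 1/2) / s * x i ^ 2) = h * (N - 1/2) / s * s"
        unfolding s(1) by (rule sum_distrib_left[symmetric])
      finally show ?thesis by (simp add: N_def)
    qed
    also have "\<dots> = - h/2" using s(2) by (simp add: field_simps)
    finally show ?thesis .
  qed
  have errb: "\<bar>(\<Sum>i\<in>UNIV. \<Sum>j\<in>UNIV. (G i j - \<delta> i j) * H i j - G i j * K i j)\<bar>
      \<le> N * (N * (\<eta> * (h * (N+1)) + 2 * (N * (\<gamma> * a))))"
    unfolding N_def
  proof (intro sum_abs_bound)
    fix i j
    have "\<bar>(G i j - \<delta> i j) * H i j\<bar> \<le> \<eta> * (h * (N+1))"
      using Eb[of i j] Hb[of i j] by (rule abs_mult2)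
    moreover have "\<bar>G i j * K i j\<bar> \<le> 2 * (N * (\<gamma> * a))"
      using Gb2[of i j] Kb[of i j] by (rule abs_mult2)
    ultimately show "\<bar>(G i j - \<delta> i j) * H i j - G i j * K i j\<bar>
       \<le> \<eta> * (h * (real CARD('n) + 1)) + 2 * (real CARD('n) * (\<gamma> * a))"
      unfolding N_def by linarith
  qed
  have "N * (N * (\<eta> * (h * (N+1)) + 2 * (N * (\<gamma> * a))))
      = h * (N^2 * (N+1) * e) + h * (8 * (N^4 * (N+1) * a^2)) + 2 * N^3 * (\<gamma> * a)"
    unfolding \<eta>_def by (simp add: algebra_simps power2_eq_square power4_eq_xxxx power3_eq_cube)
  also have "\<dots> \<le> h * (1/8) + h * (8 * (1/32)) + h/16"
    using Ne Na2 Ng h by (intro add_mono mult_left_mono) auto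
  finally have err2: "N * (N * (\<eta> * (h * (N+1)) + 2 * (N * (\<gamma> * a)))) < h/2" using h by simp
  have main: "(\<Sum>i\<in>UNIV. \<Sum>j\<in>UNIV. G i j * (H i j - K i j)) \<le> 0"
  proof -
    have "(\<Sum>i\<in>UNIV. \<Sum>j\<in>UNIV. G i j * (H i j - K i j))
        = (\<Sum>i\<in>UNIV. \<Sum>j\<in>UNIV. \<delta> i j * H i j)
          + (\<Sum>i\<in>UNIV. \<Sum>j\<in>UNIV. (G i j - \<delta> i j) * H i j - G i j * K i j)"
      unfolding split by (simp add: sum.distrib)
    then show ?thesis using diag errb err2 by linarith
  qed
  show ?thesis
    using main Qb unfolding G_def T_def K_def Q_def by simp
qed



lemma matrix_inv_right':
  fixes M :: "real^'n^'n"
  assumes "invertible M"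
  shows "M ** matrix_inv M = mat 1"
proof -
  have "\<exists>A'. M ** A' = mat 1 \<and> A' ** M = mat 1" using assms unfolding invertible_def by blast
  then show ?thesis unfolding matrix_inv_def by (rule someI2_ex) blast
qed

lemma inv_close:
  fixes M :: "real^'n^'n"
  assumes inv: "invertible M" and Mb: "\<And>i j. \<bar>M$i$j - (if i = j then 1 else 0)\<bar> \<le> w"
    and Nw: "real CARD('n) * w \<le> 1/2"
  shows "\<bar>matrix_inv M $ i $ j - (if i = j then 1 else 0)\<bar> \<le> 2 * real CARD('n) * w"
proof -
  define A where "A = matrix_inv M"
  define N where "N = real CARD('n)"
  have w0: "w \<ge> 0" using Mb[of i j] by simp
  have MA: "M ** A = mat 1" unfolding A_def by (rule matrix_inv_right'[OF inv])
  have ent: "A$i$j = (if i = j then 1 else 0) - (\<Sum>k\<in>UNIV. (M$i$k - (if i = k then 1 else 0)) * A$k$j)" for i j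
  proof -
    have "(M ** A) $ i $ j = (\<Sum>k\<in>UNIV. M$i$k * A$k$j)" by (simp add: matrix_matrix_mult_def)
    then have e1: "(\<Sum>k\<in>UNIV. M$i$k * A$k$j) = (if i = j then 1 else 0)" using MA by (simp add: mat_def)
    have "(\<Sum>k\<in>UNIV. (M$i$k - (if i = k then 1 else 0)) * A$k$j)
        = (\<Sum>k\<in>UNIV. M$i$k * A$k$j) - (\<Sum>k\<in>UNIV. (if i = k then A$k$j else 0))"
    proof -
      have "\<And>k. (M$i$k - (if i = k then 1 else 0)) * A$k$j = M$i$k * A$k$j - (if i = k then A$k$j else 0)"
        by (simp add: algebra_simps)
      then show ?thesis by (simp add: sum_subtractf)
    qed
    also have "\<dots> = (if i = j then 1 else 0) - A$i$j" using e1 by simp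
    finally show ?thesis by simp
  qed
  define m where "m = Max ((\<lambda>(i,j). \<bar>A$i$j\<bar>) ` UNIV)"
  have mge: "\<bar>A$i$j\<bar> \<le> m" for i j unfolding m_def by (rule Max_ge) auto
  have "m \<in> (\<lambda>(i,j). \<bar>A$i$j\<bar>) ` UNIV" unfolding m_def by (rule Max_in) auto
  then obtain i0 j0 where m0: "m = \<bar>A$i0$j0\<bar>" by auto
  have sb: "\<bar>\<Sum>k\<in>UNIV. (M$i$k - (if i = k then 1 else 0)) * A$k$j\<bar> \<le> N * (w * m)" for i j
    unfolding N_def by (intro sum_abs_bound abs_mult2 Mb mge)
  have "m \<le> 1 + N * (w * m)"
    using ent[of i0 j0] sb[of i0 j0] m0 by (auto split: if_splits)
  moreover have "N * (w * m) \<le> m / 2"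
  proof -
    have "m \<ge> 0" using m0 by simp
    then have "(N * w) * m \<le> (1/2) * m" using Nw unfolding N_def by (intro mult_right_mono) auto
    then show ?thesis by (simp add: mult.assoc)
  qed
  ultimately have m2: "m \<le> 2" by simp
  have "\<bar>A$i$j - (if i = j then 1 else 0)\<bar> \<le> N * (w * m)" using ent[of i j] sb[of i j] by simp
  also have "\<dots> \<le> N * (w * 2)" using m2 w0 unfolding N_def by (intro mult_left_mono) auto
  finally show ?thesis unfolding A_def N_def by simp
qed



lemma partial_from_deriv:
  assumes "(f has_derivative f') (at x)"
  shows "partial k f x = f' (axis k 1)"
proof -
  have l: "((\<lambda>t::real. x + t *\<^sub>R axis k 1) has_derivative (\<lambda>t. t *\<^sub>R axis k 1)) (at 0)"
    by (rule derivative_eq_intros refl | simp)+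
  have "((\<lambda>t. f (x + t *\<^sub>R axis k 1)) has_derivative (\<lambda>t. f' (t *\<^sub>R axis k 1))) (at 0)"
    using has_derivative_compose[OF l] assms by (simp add: o_def)
  moreover have lin: "linear f'" using assms has_derivative_linear by blast
  have "(\<lambda>t. f' (t *\<^sub>R axis k 1)) = (*) (f' (axis k 1))"
    using linear_scale[OF lin] by (auto simp: mult.commute)
  ultimately have "((\<lambda>t. f (x + t *\<^sub>R axis k 1)) has_real_derivative f' (axis k 1)) (at 0)"
    by (simp add: has_field_derivative_def)
  then show ?thesis unfolding partial_def by (rule DERIV_imp_deriv)
qed

lemma has_derivative_vec_nth' [derivative_intros]:
  "((\<lambda>x::real^'n. x $ j) has_derivative (\<lambda>x. x $ j)) F"
  by (rule bounded_linear_imp_has_derivative) (rule bounded_linear_vec_nth)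

lemma d1:
  fixes x :: "real^'n"
  assumes "x \<noteq> 0"
  shows "((\<lambda>y. c * (y \<bullet> y) powr (-q)) has_derivative
     (\<lambda>v. c * (-q) * (x\<bullet>x) powr (-q-1) * (2 * (x \<bullet> v)))) (at x)"
proof -
  have "x \<bullet> x > 0" using assms by simp
  then show ?thesis
    apply -
    apply (rule derivative_eq_intros refl | simp)+
    apply (simp add: inner_commute algebra_simps powr_diff)
    done
qed

lemma d2:
  fixes x :: "real^'n"
  assumes "x \<noteq> 0"
  shows "((\<lambda>y. c * (-q) * (y\<bullet>y) powr (-q-1) * (2 * y $ j)) has_derivative
     (\<lambda>v. c * (-q) * ((-q-1) * (x\<bullet>x) powr (-q-2) * (2 * (x \<bullet> v)) * (2 * x $ j)
        + (x\<bullet>x) powr (-q-1) * (2 * v $ j)))) (at x)"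
proof -
  have "x \<bullet> x > 0" using assms by simp
  then show ?thesis
    apply -
    apply (rule derivative_eq_intros refl | simp)+
    apply (rule ext) apply (simp add: inner_commute powr_diff field_simps power2_eq_square)
    done
qed

lemma powr_sq_norm:
  fixes x :: "real^'n"
  assumes "x \<noteq> 0"
  shows "(x \<bullet> x) powr y = norm x powr (2 * y)"
proof -
  have n0: "norm x > 0" using assms by simp
  have e: "norm x powr 2 = norm x ^ 2" using n0 by simp
  have "(x \<bullet> x) powr y = (norm x powr 2) powr y" unfolding e by (simp add: power2_norm_eq_inner)
  also have "\<dots> = norm x powr (2 * y)" by (rule powr_powr)
  finally show ?thesis .
qed

lemma posdef_invertible:
  fixes A :: "real^'n^'n"
  assumes "\<forall>v. v \<noteq> 0 \<longrightarrow> v \<bullet> (A *v v) > 0"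
  shows "invertible A"
proof -
  have "\<forall>v. A *v v = 0 \<longrightarrow> v = 0" using assms by force
  then show ?thesis unfolding invertible_left_inverse matrix_left_invertible_ker .
qed

lemma alg_H:
  fixes s c q P xi xj d :: real
  assumes "s \<noteq> 0"
  shows "c * (-q) * ((-q-1) * (P/s) * (2 * xi) * (2 * xj) + P * (2 * d)) = (2*q*c*P) * ((2*q+2) * xi * xj / s - d)"
  using assms by (simp add: field_simps)

theorem lemma3p1:
  assumes "CARD('n::finite) \<ge> 3"
  shows "\<exists>C>0. \<forall>(\<sigma> :: real^'n \<Rightarrow> real^'n^'n) R0.
    riemannian_exterior \<sigma> R0 \<and> asymp_flat \<sigma> \<longrightarrow>
    (\<exists>r1>0. \<forall>r0\<ge>r1. \<exists>b :: real^'n \<Rightarrow> real.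
       (\<forall>x y. r0 \<le> norm x \<and> norm x = norm y \<longrightarrow> b x = b y) \<and>
       (\<forall>x. r0 \<le> norm x \<longrightarrow>
          r0 powr (real CARD('n) - 3/2) * norm x powr (- (real CARD('n) - 5/2)) \<le> C * b x \<and>
          b x \<le> C * (r0 powr (real CARD('n) - 3/2) * norm x powr (- (real CARD('n) - 5/2)))) \<and>
       twice_diff_on {x. r0 < norm x} b \<and>
       (\<forall>x. r0 < norm x \<longrightarrow> grad_norm2 \<sigma> b x < 1 \<and> static_op \<sigma> b x \<le> 0))"
proof -
  define N where "N = real CARD('n)"
  have N3: "N \<ge> 3" using assms unfolding N_def by simp
  define p where "p = N - 5/2"
  define q where "q = p / 2"
  define \<epsilon> where "\<epsilon> = 1 / (8 * N^4)"
  define C where "C = 8 * N^4"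
  define \<omega>0 where "\<omega>0 = 1 / (100 * N^5)"
  have p0: "p \<ge> 1/2" using N3 unfolding p_def by simp
  have q0: "q > 0" using p0 unfolding q_def by simp
  have eps0: "\<epsilon> > 0" using N3 unfolding \<epsilon>_def by simp
  have C0: "C > 0" using N3 unfolding C_def by simp
  have N4: "N^4 \<ge> 1" using N3 by (simp add: one_le_power)
  have epsC: "\<epsilon> \<le> C"
  proof -
    have "\<epsilon> \<le> 1" unfolding \<epsilon>_def using N4 by (simp add: divide_le_eq)
    moreover have "1 \<le> C" unfolding C_def using N4 by simp
    ultimately show ?thesis by linarith
  qed
  have Npos: "N > 0" using N3 by simp
  have epsC1: "C * \<epsilon> = 1" using N3 unfolding C_def \<epsilon>_def by simp
  have w00: "\<omega>0 > 0" using N3 unfolding \<omega>0_def by simp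
  show ?thesis
  proof (rule exI[of _ C], intro conjI allI impI C0)
    fix \<sigma> :: "real^'n \<Rightarrow> real^'n^'n" and R0
    assume "riemannian_exterior \<sigma> R0 \<and> asymp_flat \<sigma>"
    then have RE: "riemannian_exterior \<sigma> R0" and AF: "asymp_flat \<sigma>" by auto
    from AF obtain \<omega> :: "real \<Rightarrow> real" and R where
      lim: "(\<omega> \<longlongrightarrow> 0) at_top" and
      AFb: "\<And>x i j k. R \<le> norm x \<Longrightarrow> \<bar>\<sigma> x $ i $ j - (if i = j then 1 else 0)\<bar> \<le> \<omega> (norm x) \<and>
                 \<bar>partial k (\<lambda>y. \<sigma> y $ i $ j) x\<bar> \<le> \<omega> (norm x) / norm x"
      unfolding asymp_flat_def by blast
    have "eventually (\<lambda>r. \<omega> r < \<omega>0) at_top" using order_tendstoD(2)[OF lim w00] .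
    then obtain Rw where Rw: "\<And>r. r \<ge> Rw \<Longrightarrow> \<omega> r < \<omega>0" unfolding eventually_at_top_linorder by blast
    define r1 where "r1 = max 1 (max (R0 + 1) (max R Rw))"
    show "\<exists>r1>0. \<forall>r0\<ge>r1. \<exists>b :: real^'n \<Rightarrow> real.
       (\<forall>x y. r0 \<le> norm x \<and> norm x = norm y \<longrightarrow> b x = b y) \<and>
       (\<forall>x. r0 \<le> norm x \<longrightarrow>
          r0 powr (real CARD('n) - 3/2) * norm x powr (- (real CARD('n) - 5/2)) \<le> C * b x \<and>
          b x \<le> C * (r0 powr (real CARD('n) - 3/2) * norm x powr (- (real CARD('n) - 5/2)))) \<and>
       twice_diff_on {x. r0 < norm x} b \<and>
       (\<forall>x. r0 < norm x \<longrightarrow> grad_norm2 \<sigma> b x < 1 \<and> static_op \<sigma> b x \<le> 0)"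
    proof (rule exI[of _ r1], intro conjI allI impI)
      show "r1 > 0" unfolding r1_def by simp
      fix r0 assume r0: "r0 \<ge> r1"
      have r01: "r0 \<ge> 1" using r0 unfolding r1_def by simp
      define c where "c = \<epsilon> * r0 powr (N - 3/2)"
      have c0: "c > 0" using eps0 r01 unfolding c_def by simp
      define b where "b = (\<lambda>y::real^'n. c * (y \<bullet> y) powr (-q))"
      define bk where "bk j y = c * (-q) * (y\<bullet>y) powr (-q-1) * (2 * y $ j)" for j and y :: "real^'n"
      have bnorm: "b y = c * norm y powr (-p)" if "y \<noteq> 0" for y
        unfolding b_def using powr_sq_norm[OF that] by (simp add: q_def)
      have pk: "partial j b y = bk j y" if "y \<noteq> 0" for j y
      proof -
        have "partial j b y = c * (-q) * (y\<bullet>y) powr (-q-1) * (2 * (y \<bullet> axis j 1))"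
          unfolding b_def by (rule partial_from_deriv[OF d1[OF that]])
        then show ?thesis unfolding bk_def by (simp add: inner_axis)
      qed
      have pkd: "(partial j b has_derivative (\<lambda>v. c * (-q) * ((-q-1) * (x\<bullet>x) powr (-q-2) * (2 * (x \<bullet> v)) * (2 * x $ j)
        + (x\<bullet>x) powr (-q-1) * (2 * v $ j)))) (at x)" if "x \<noteq> 0" for j x
      proof (rule has_derivative_transform_within_open[OF d2[OF that] _ _])
        show "open {y::real^'n. y \<noteq> 0}" by (simp add: open_Collect_neq)
        show "x \<in> {y. y \<noteq> 0}" using that by simp
        fix y :: "real^'n" assume "y \<in> {y. y \<noteq> 0}"
        then show "c * - q * (y \<bullet> y) powr (- q - 1) * (2 * y $ j) = partial j b y"
          using pk[of y j] unfolding bk_def by simp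
      qed
      have nz: "x \<noteq> 0" if "x \<in> {x. r0 < norm x}" for x :: "real^'n"
      proof
        assume "x = 0" then show False using that r01 by simp
      qed
      have T: "twice_diff_on {x. r0 < norm x} b"
        unfolding twice_diff_on_def differentiable_on_def
      proof (intro conjI ballI allI)
        fix x :: "real^'n" assume "x \<in> {x. r0 < norm x}"
        then have x0: "x \<noteq> 0" by (rule nz)
        show "b differentiable at x within {x. r0 < norm x}"
          unfolding b_def by (rule differentiableI, rule has_derivative_at_withinI, rule d1[OF x0])
      next
        fix k and x :: "real^'n" assume "x \<in> {x. r0 < norm x}"
        then have x0: "x \<noteq> 0" by (rule nz)
        show "partial k b differentiable at x within {x. r0 < norm x}"
          by (rule differentiableI, rule has_derivative_at_withinI, rule pkd[OF x0])
      qed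
      have Sym: "\<forall>x y. r0 \<le> norm x \<and> norm x = norm y \<longrightarrow> b x = b y"
        unfolding b_def by (simp add: power2_norm_eq_inner[symmetric])
      have Bd: "\<forall>x. r0 \<le> norm x \<longrightarrow>
          r0 powr (real CARD('n) - 3/2) * norm x powr (- (real CARD('n) - 5/2)) \<le> C * b x \<and>
          b x \<le> C * (r0 powr (real CARD('n) - 3/2) * norm x powr (- (real CARD('n) - 5/2)))"
      proof (intro allI impI)
        fix x :: "real^'n" assume xr: "r0 \<le> norm x"
        have x0: "x \<noteq> 0"
        proof
          assume "x = 0" then show False using xr r01 by simp
        qed
        define tg where "tg = r0 powr (real CARD('n) - 3/2) * norm x powr (- (real CARD('n) - 5/2))"
        have tg0: "tg \<ge> 0" unfolding tg_def by simp
        have bx: "b x = \<epsilon> * tg" unfolding bnorm[OF x0] c_def tg_def p_def N_def by simp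
        have Cb: "C * b x = tg"
        proof -
          have "C * b x = (C * \<epsilon>) * tg" unfolding bx by (simp only: mult.assoc)
          then show ?thesis using epsC1 by simp
        qed
        have "\<epsilon> * tg \<le> C * tg" using epsC tg0 by (intro mult_right_mono) auto
        then have "b x \<le> C * tg" using bx by linarith
        moreover have "tg \<le> C * b x" using Cb by linarith
        ultimately show "tg \<le> C * b x \<and> b x \<le> C * tg" by blast
      qed
      have St: "\<forall>x. r0 < norm x \<longrightarrow> grad_norm2 \<sigma> b x < 1 \<and> static_op \<sigma> b x \<le> 0"
      proof (intro allI impI)
        fix x :: "real^'n"
        assume xr: "r0 < norm x"
        define r where "r = norm x"
        define s where "s = x \<bullet> x"
        have r0r: "r0 \<le> r" using xr unfolding r_def by simp
        have rpos: "r > 0" using xr r01 unfolding r_def by linarith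
        have x0: "x \<noteq> 0"
        proof
          assume "x = 0" then show False using xr r01 by simp
        qed
        have spos: "s > 0" using x0 unfolding s_def by simp
        have sr: "s = r^2" unfolding s_def r_def by (simp add: power2_norm_eq_inner)
        have sqs: "sqrt s = r" using sr rpos by simp
        define h where "h = 2 * q * c * s powr (-q-1)"
        have hpos: "h > 0" unfolding h_def using q0 c0 spos by simp
        have gk: "partial k b x = - h * x$k" for k
          using pk[OF x0, of k] unfolding bk_def h_def s_def by simp
        have ax: "axis i 1 $ j = (if i = j then 1 else (0::real))" for i j by (auto simp: axis_def)
        have sq2: "s powr (-q-2) = s powr (-q-1) / s"
        proof -
          have "s powr (-q-2) = s powr ((-q-1) - 1)" by (simp add: algebra_simps)
          also have "\<dots> = s powr (-q-1) / s powr 1" by (rule powr_diff)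
          also have "\<dots> = s powr (-q-1) / s" using spos by simp
          finally show ?thesis .
        qed
        have NN: "N - 1/2 = 2*q + 2" unfolding q_def p_def by (simp add: field_simps)
        have Hij: "partial i (partial j b) x = h * ((N - 1/2) * x$i * x$j / s - (if i = j then 1 else 0))" for i j
        proof -
          have "partial i (partial j b) x = c * (-q) * ((-q-1) * s powr (-q-2) * (2 * (x \<bullet> axis i 1)) * (2 * x $ j)
             + s powr (-q-1) * (2 * (axis i 1 $ j)))"
            unfolding s_def by (rule partial_from_deriv[OF pkd[OF x0]])
          also have "\<dots> = h * ((N - 1/2) * x$i * x$j / s - (if i = j then 1 else 0))"
            unfolding sq2 NN h_def inner_axis using alg_H[of s c q "s powr (-q-1)" "x$i" "x$j" "axis i 1 $ j"] spos
            by (simp add: ax)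
          finally show ?thesis .
        qed
        define a where "a = h * sqrt s"
        have a_eq: "a = p * \<epsilon> * (r0 powr (p+1) / r powr (p+1))"
        proof -
          have ex: "2 * (-q-1) = -(p+1) - 1" unfolding q_def by simp
          have "s powr (-q-1) = r powr (2 * (-q-1))" unfolding s_def r_def by (rule powr_sq_norm[OF x0])
          also have "\<dots> = r powr (-(p+1) - 1)" unfolding ex ..
          also have "\<dots> = r powr (-(p+1)) / r powr 1" by (rule powr_diff)
          also have "\<dots> = r powr (-(p+1)) / r" using rpos by simp
          also have "\<dots> = (1 / r powr (p+1)) / r" by (simp only: powr_minus_divide)
          finally have sp: "s powr (-q-1) = (1 / r powr (p+1)) / r" .
          have Np: "N - 3/2 = p + 1" unfolding p_def by simp
          have "a = 2 * q * (\<epsilon> * r0 powr (p+1)) * ((1 / r powr (p+1)) / r) * r"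
            unfolding a_def h_def sqs sp c_def Np ..
          also have "\<dots> = p * \<epsilon> * (r0 powr (p+1) / r powr (p+1))"
            using rpos unfolding q_def by (simp add: field_simps)
          finally show ?thesis .
        qed
        have ratio: "r0 powr (p+1) / r powr (p+1) \<le> 1"
        proof -
          have "r0 powr (p+1) \<le> r powr (p+1)" using r0r r01 p0 by (intro powr_mono2) auto
          then show ?thesis using rpos by simp
        qed
        have a0: "a \<ge> 0" unfolding a_def using hpos spos by simp
        have ape: "a \<le> p * \<epsilon>"
        proof -
          have "p * \<epsilon> * (r0 powr (p+1) / r powr (p+1)) \<le> p * \<epsilon> * 1"
            using ratio p0 eps0 by (intro mult_left_mono) auto
          then show ?thesis unfolding a_eq by simp
        qed
        have pe: "p * \<epsilon> \<le> 1 / (8 * N^3)"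
        proof -
          have "p * \<epsilon> \<le> N * \<epsilon>" using eps0 unfolding p_def by (intro mult_right_mono) auto
          also have "N * \<epsilon> = 1 / (8 * N^3)" unfolding \<epsilon>_def using Npos by (simp add: eval_nat_numeral field_simps)
          finally show ?thesis .
        qed
        have a2: "a^2 \<le> 1 / (64 * N^5)"
        proof -
          have "a^2 \<le> (1 / (8 * N^3))^2" using a0 ape pe by (intro power_mono) auto
          also have "\<dots> = 1 / (64 * N^6)" by (simp add: power_mult_distrib power_divide eval_nat_numeral)
          also have "\<dots> \<le> 1 / (64 * N^5)"
          proof -
            have "N^5 \<le> N^6" using N3 by (intro power_increasing) auto
            moreover have "N^5 > 0" using Npos by simp
            ultimately show ?thesis by (intro divide_left_mono) auto
          qed
          finally show ?thesis .
        qed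
        define w where "w = \<omega> r"
        have Rr: "R \<le> r" using r0r r0 unfolding r1_def by simp
        have R0r: "R0 < r" using r0r r0 unfolding r1_def by simp
        have Rwr: "Rw \<le> r" using r0r r0 unfolding r1_def by simp
        have ww: "w < \<omega>0" using Rw[OF Rwr] unfolding w_def .
        have Mb: "\<bar>\<sigma> x $ i $ j - (if i = j then 1 else 0)\<bar> \<le> w" for i j
          using AFb[of x i j] Rr unfolding w_def r_def by blast
        have Pb: "\<bar>partial k (\<lambda>y. \<sigma> y $ i $ j) x\<bar> \<le> w / r" for i j k
          using AFb[of x i j k] Rr unfolding w_def r_def by blast
        have w0: "w \<ge> 0" using Mb[of undefined undefined] by simp
        have posd: "\<forall>v. v \<noteq> 0 \<longrightarrow> v \<bullet> (\<sigma> x *v v) > 0"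
          using RE R0r unfolding riemannian_exterior_def r_def by blast
        have Nw0: "N * w \<le> 1 / (100 * N^4)"
        proof -
          have "N * w \<le> N * \<omega>0" using ww Npos by (intro mult_left_mono) auto
          also have "\<dots> = 1 / (100 * N^4)" unfolding \<omega>0_def using Npos by (simp add: eval_nat_numeral field_simps)
          finally show ?thesis .
        qed
        have Nw: "N * w \<le> 1/2"
        proof -
          have "1 / (100 * N^4) \<le> 1/2" using N4 by (simp add: divide_le_eq)
          then show ?thesis using Nw0 by linarith
        qed
        define e where "e = 2 * N * w"
        have Sb: "\<bar>inv_metric \<sigma> x i j - (if i = j then 1 else 0)\<bar> \<le> e" for i j
          unfolding inv_metric_def e_def N_def
          by (rule inv_close[OF posdef_invertible[OF posd] Mb]) (use Nw N_def in simp)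
        have e1: "e \<le> 1/(8*N^2*(N+1))"
        proof -
          have "e \<le> 2 * (1 / (100 * N^4))" unfolding e_def using Nw0 by simp
          also have "\<dots> = 1 / (50 * N^4)" by simp
          also have "\<dots> \<le> 1/(8*N^2*(N+1))"
          proof (rule divide_left_mono)
            have "N^2 * (N+1) \<le> N^2 * (2*N)" using N3 by (intro mult_left_mono) auto
            also have "\<dots> = 2 * N^3" by (simp add: eval_nat_numeral)
            also have "N^3 \<le> N^4" using N3 by (intro power_increasing) auto
            ultimately have "N^2 * (N+1) \<le> 2 * N^4" by linarith
            then show "8*N^2*(N+1) \<le> 50 * N^4" using N4 by linarith
            show "0 < 50 * N ^ 4 * (8 * N\<^sup>2 * (N + 1))" using Npos by simp
          qed simp
          finally show ?thesis .
        qed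
        have e1': "e \<le> 1" unfolding e_def using Nw by simp
        have Sa: "\<bar>inv_metric \<sigma> x i j\<bar> \<le> 2" for i j
          using Sb[of i j] e1' by (auto split: if_splits)
        define \<gamma> where "\<gamma> = 3 * N * w / r"
        have Gb: "\<bar>christoffel \<sigma> x k i j\<bar> \<le> \<gamma>" for k i j
        proof -
          have "\<bar>\<Sum>l\<in>UNIV. inv_metric \<sigma> x k l *
              (partial i (\<lambda>y. \<sigma> y $ j $ l) x + partial j (\<lambda>y. \<sigma> y $ i $ l) x
               - partial l (\<lambda>y. \<sigma> y $ i $ j) x)\<bar> \<le> N * (2 * (3 * (w / r)))"
            unfolding N_def
          proof (intro sum_abs_bound abs_mult2 Sa)
            fix l
            show "\<bar>partial i (\<lambda>y. \<sigma> y $ j $ l) x + partial j (\<lambda>y. \<sigma> y $ i $ l) x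
               - partial l (\<lambda>y. \<sigma> y $ i $ j) x\<bar> \<le> 3 * (w / r)"
              using Pb[of i j l] Pb[of j i l] Pb[of l i j] by linarith
          qed
          then show ?thesis unfolding christoffel_def \<gamma>_def by (simp add: abs_mult algebra_simps)
        qed
        have gam: "\<gamma> * a \<le> h / (32 * N^3)"
        proof -
          have ga: "\<gamma> * a = (3 * (N * w)) * h" unfolding \<gamma>_def a_def sqs using rpos by simp
          have "3 * (N * w) \<le> 3 * (1 / (100 * N^4))" using Nw0 by simp
          also have "\<dots> \<le> 1 / (32 * N^3)"
          proof -
            have "N^3 \<le> N^4" using N3 by (intro power_increasing) auto
            then have "96 * N^3 \<le> 100 * N^4" using N4 by linarith
            then show ?thesis using Npos by (simp add: field_simps)
          qed
          finally have "3 * (N * w) * h \<le> 1 / (32 * N^3) * h" using hpos by (intro mult_right_mono) auto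
          then show ?thesis unfolding ga by simp
        qed
        have ss: "s = (\<Sum>k\<in>UNIV. (x$k)^2)" unfolding s_def by (simp add: inner_vec_def power2_eq_square)
        note core = static_core[where S = "inv_metric \<sigma> x" and \<Gamma> = "christoffel \<sigma> x" and x = "\<lambda>k. x$k"
           and g = "\<lambda>k. partial k b x" and H = "\<lambda>i j. partial i (partial j b) x" and s = s and h = h and a = a
           and e = e and \<gamma> = \<gamma>, OF ss spos hpos a_def a2[unfolded N_def] Sb e1[unfolded N_def] Gb gam[unfolded N_def]
           gk Hij[unfolded N_def]]
        show "grad_norm2 \<sigma> b x < 1 \<and> static_op \<sigma> b x \<le> 0"
          using core unfolding grad_norm2_def static_op_def g_inv_def cov_hess_def by simp
      qed
      show "\<exists>b :: real^'n \<Rightarrow> real.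
       (\<forall>x y. r0 \<le> norm x \<and> norm x = norm y \<longrightarrow> b x = b y) \<and>
       (\<forall>x. r0 \<le> norm x \<longrightarrow>
          r0 powr (real CARD('n) - 3/2) * norm x powr (- (real CARD('n) - 5/2)) \<le> C * b x \<and>
          b x \<le> C * (r0 powr (real CARD('n) - 3/2) * norm x powr (- (real CARD('n) - 5/2)))) \<and>
       twice_diff_on {x. r0 < norm x} b \<and>
       (\<forall>x. r0 < norm x \<longrightarrow> grad_norm2 \<sigma> b x < 1 \<and> static_op \<sigma> b x \<le> 0)"
        using Sym Bd T St by blast
    qed
  qed
qed

end
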